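(* For all non-product distributions $P(A,B)$, the matrices $\mathbf{P}(A|B)\,\mathbf{P}(B|A)$ and $\mathbf{P}(B|A)\,\mathbf{P}(A|B)$ are equal to the identities of size $N_A$ and $N_B$ respectively.
   Context: Let $A$ and $B$ be random variables taking values $a_1,\ldots,a_{N_A}$ and $b_1,\ldots,b_{N_B}$. Probability is axiomatized over ordered sequences rather than sets: for each ordering of the variables there is a real-valued (not necessarily non-negative) joint probability, $P(a_i,b_j)$ for the ordering in which $B$ precedes $A$ and $P(b_j,a_i)$ for the ordering in which $A$ precedes $B$; for each ordering the probabilities are additive and sum to $1$, and the marginals do not depend on the ordering, i.e. $\sum_j P(a_i,b_j)=P(a_i)=\sum_j P(b_j,a_i)$ (and similarly for $P(b_j)$). Conditional probabilities are defined by $P(a_i|b_j)=P(a_i,b_j)/P(b_j)$ and $P(b_j|a_i)=P(b_j,a_i)/P(a_i)$, and $\mathbf{P}(A|B)$ denotes the $N_A\times N_B$ matrix with entries $P(a_i|b_j)$ (similarly $\mathbf{P}(B|A)$), while $\vec{P}(A)$, $\vec{P}(B)$ denote the marginal vectors. In addition the following inference axiom is imposed: $\mathbf{P}(A|B)$ and $\mathbf{P}(B|A)$ may be specified independently of $\vec{P}(B)$ and $\vec{P}(A)$. It is assumed that $\mathbf{P}(A|B)$ is invertible. *)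

theory Defs
  imports "HOL-Analysis.Analysis"
begin

text \<open>PAB a b is P(a_i,b_j) (ordering in which
B precedes A), PBA b a is P(b_j,a_i) (ordering in which A precedes B).  Values are
real, not necessarily non-negative; each ordering sums to 1 and marginals agree.\<close>

definition margA :: "('a::finite \<Rightarrow> 'b::finite \<Rightarrow> real) \<Rightarrow> 'a \<Rightarrow> real" where
  "margA PAB a = (\<Sum>b\<in>UNIV. PAB a b)"

definition margB :: "('a::finite \<Rightarrow> 'b::finite \<Rightarrow> real) \<Rightarrow> 'b \<Rightarrow> real" where
  "margB PAB b = (\<Sum>a\<in>UNIV. PAB a b)"

definition ordered_dist ::
  "('a::finite \<Rightarrow> 'b::finite \<Rightarrow> real) \<Rightarrow> ('b \<Rightarrow> 'a \<Rightarrow> real) \<Rightarrow> bool" where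
  "ordered_dist PAB PBA \<longleftrightarrow>
     (\<Sum>a\<in>UNIV. \<Sum>b\<in>UNIV. PAB a b) = 1 \<and>
     (\<Sum>b\<in>UNIV. \<Sum>a\<in>UNIV. PBA b a) = 1 \<and>
     (\<forall>a. (\<Sum>b\<in>UNIV. PAB a b) = (\<Sum>b\<in>UNIV. PBA b a)) \<and>
     (\<forall>b. (\<Sum>a\<in>UNIV. PAB a b) = (\<Sum>a\<in>UNIV. PBA b a))"

definition condAB :: "('a::finite \<Rightarrow> 'b::finite \<Rightarrow> real) \<Rightarrow> real^'b^'a" where
  "condAB PAB = (\<chi> a b. PAB a b / margB PAB b)"

definition condBA :: "('b::finite \<Rightarrow> 'a::finite \<Rightarrow> real) \<Rightarrow> real^'a^'b" where
  "condBA PBA = (\<chi> b a. PBA b a / (\<Sum>b'\<in>UNIV. PBA b' a))"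

definition product_dist ::
  "('a::finite \<Rightarrow> 'b::finite \<Rightarrow> real) \<Rightarrow> ('b \<Rightarrow> 'a \<Rightarrow> real) \<Rightarrow> bool" where
  "product_dist PAB PBA \<longleftrightarrow>
     (\<forall>a b. PAB a b = margA PAB a * margB PAB b) \<and>
     (\<forall>a b. PBA b a = margB PAB b * margA PAB a)"

text \<open>Inference axiom: the conditional matrices M = P(A|B) and K = P(B|A) can be specified
independently of the marginals: for every admissible marginal P(B) (resp. P(A)), i.e. one
summing to 1 with all marginals nonzero so that the conditionals are defined, there is a
distribution having exactly these conditionals and that marginal.\<close>

definition inference_axiom :: "real^'b^'a \<Rightarrow> real^'a^'b \<Rightarrow> bool" where
  "inference_axiom M K \<longleftrightarrow>
     (\<forall>q::'b \<Rightarrow> real. sum q UNIV = 1 \<and> (\<forall>b. q b \<noteq> 0) \<and>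
        (\<forall>a. (\<Sum>b\<in>UNIV. M $ a $ b * q b) \<noteq> 0) \<longrightarrow>
        (\<exists>PAB PBA. ordered_dist PAB PBA \<and> (\<forall>b. margB PAB b = q b) \<and>
           condAB PAB = M \<and> condBA PBA = K)) \<and>
     (\<forall>p::'a \<Rightarrow> real. sum p UNIV = 1 \<and> (\<forall>a. p a \<noteq> 0) \<and>
        (\<forall>b. (\<Sum>a\<in>UNIV. K $ b $ a * p a) \<noteq> 0) \<longrightarrow>
        (\<exists>PAB PBA. ordered_dist PAB PBA \<and> (\<forall>a. margA PAB a = p a) \<and>
           condAB PAB = M \<and> condBA PBA = K))"

end

theory Submission
  imports Defs
begin

lemma fix_lemma:
  fixes M :: "real^'b::finite^'a::finite" and K :: "real^'a^'b"
  assumes ax: "inference_axiom M K"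
    and q1: "sum q UNIV = 1" and q2: "\<forall>b. q b \<noteq> 0"
    and q3: "\<forall>a. (\<Sum>b\<in>UNIV. M $ a $ b * q b) \<noteq> 0"
  shows "(K ** M) *v (\<chi> b. q b) = (\<chi> b. q b)"
proof -
  from ax q1 q2 q3 obtain PAB :: "'a \<Rightarrow> 'b \<Rightarrow> real" and PBA where
    od: "ordered_dist PAB PBA" and mB: "\<forall>b. margB PAB b = q b"
    and cA: "condAB PAB = M" and cB: "condBA PBA = K"
    unfolding inference_axiom_def by blast
  have PA: "PAB a b = M $ a $ b * q b" for a b
  proof -
    have "M $ a $ b = PAB a b / margB PAB b" using cA by (auto simp: condAB_def)
    thus ?thesis using mB q2 by (simp add: field_simps)
  qed
  define p where "p a = (\<Sum>b\<in>UNIV. M $ a $ b * q b)" for a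
  have col: "(\<Sum>b'\<in>UNIV. PBA b' a) = p a" for a
    using od unfolding ordered_dist_def p_def by (simp add: PA)
  have PB: "PBA b a = K $ b $ a * p a" for a b
  proof -
    have "K $ b $ a = PBA b a / (\<Sum>b'\<in>UNIV. PBA b' a)" using cB by (auto simp: condBA_def)
    thus ?thesis using col q3 p_def by (simp add: field_simps)
  qed
  have qb: "q b = (\<Sum>a\<in>UNIV. K $ b $ a * p a)" for b
  proof -
    have "q b = margB PAB b" using mB by simp
    also have "\<dots> = (\<Sum>a\<in>UNIV. PBA b a)" using od unfolding ordered_dist_def margB_def by simp
    finally show ?thesis by (simp add: PB)
  qed
  have "(K ** M) *v (\<chi> b. q b) = K *v (M *v (\<chi> b. q b))"
    by (simp add: matrix_vector_mul_assoc)
  also have "M *v (\<chi> b. q b) = (\<chi> a. p a)"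
    by (simp add: vec_eq_iff matrix_vector_mult_def p_def)
  also have "K *v (\<chi> a. p a) = (\<chi> b. q b)"
    by (simp add: vec_eq_iff matrix_vector_mult_def qb)
  finally show ?thesis .
qed

lemma affine_finite_zero:
  fixes \<alpha> \<beta> :: real assumes "\<alpha> \<noteq> 0"
  shows "finite {t. \<alpha> + t * \<beta> = 0}"
proof -
  have "{t. \<alpha> + t * \<beta> = 0} \<subseteq> {- \<alpha> / \<beta>}"
  proof
    fix t assume "t \<in> {t. \<alpha> + t * \<beta> = 0}"
    hence h: "\<alpha> + t * \<beta> = 0" by simp
    with assms have "\<beta> \<noteq> 0" by auto
    with h show "t \<in> {- \<alpha> / \<beta>}" by (simp add: field_simps)
  qed
  thus ?thesis using finite_subset by blast
qed

theorem theorem1: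
  fixes PAB :: "'a::finite \<Rightarrow> 'b::finite \<Rightarrow> real" and PBA :: "'b \<Rightarrow> 'a \<Rightarrow> real"
  assumes "ordered_dist PAB PBA"
    and "\<forall>a. margA PAB a \<noteq> 0" and "\<forall>b. margB PAB b \<noteq> 0"
    and "\<not> product_dist PAB PBA"
    and "invertible (condAB PAB)"
    and "inference_axiom (condAB PAB) (condBA PBA)"
  shows "condAB PAB ** condBA PBA = mat 1 \<and> condBA PBA ** condAB PAB = mat 1"
proof -
  define M where "M = condAB PAB"
  define K where "K = condBA PBA"
  define q0 where "q0 b = margB PAB b" for b
  have Mq0: "(\<Sum>b\<in>UNIV. M $ a $ b * q0 b) = margA PAB a" for a
    using assms(3) by (simp add: M_def condAB_def q0_def margA_def)
  have sq0: "sum q0 UNIV = 1"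
    using assms(1) unfolding ordered_dist_def q0_def margB_def
    by (metis sum.swap)
  have ax: "inference_axiom M K" using assms(6) M_def K_def by simp
  have L0: "(K ** M) *v (\<chi> b. q0 b) = (\<chi> b. q0 b)"
    by (rule fix_lemma[OF ax sq0]) (use assms(2,3) Mq0 q0_def in auto)
  have Lv: "(K ** M) *v (\<chi> b. v b) = (\<chi> b. v b)" if sv: "sum v UNIV = 0" for v :: "'b \<Rightarrow> real"
  proof -
    define S where "S = (\<Union>b. {t. q0 b + t * v b = 0}) \<union>
       (\<Union>a. {t. margA PAB a + t * (\<Sum>b\<in>UNIV. M $ a $ b * v b) = 0}) \<union> {0}"
    have "finite S" unfolding S_def
      using affine_finite_zero assms(2,3) q0_def by auto
    then obtain t where t: "t \<notin> S"
      using ex_new_if_finite[OF infinite_UNIV_char_0] by blast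
    define q where "q b = q0 b + t * v b" for b
    have "sum q UNIV = 1" using sq0 sv by (simp add: q_def sum.distrib sum_distrib_left[symmetric])
    moreover have "\<forall>b. q b \<noteq> 0" using t unfolding S_def q_def by auto
    moreover have "(\<Sum>b\<in>UNIV. M $ a $ b * q b) = margA PAB a + t * (\<Sum>b\<in>UNIV. M $ a $ b * v b)" for a
      by (simp add: q_def algebra_simps sum.distrib sum_distrib_left Mq0[symmetric])
    hence "\<forall>a. (\<Sum>b\<in>UNIV. M $ a $ b * q b) \<noteq> 0" using t unfolding S_def by auto
    ultimately have Lq: "(K ** M) *v (\<chi> b. q b) = (\<chi> b. q b)" by (rule fix_lemma[OF ax])
    have "(\<chi> b. q b) = (\<chi> b. q0 b) + t *\<^sub>R (\<chi> b. v b)" by (simp add: vec_eq_iff q_def)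
    hence "(\<chi> b. q0 b) + t *\<^sub>R ((K ** M) *v (\<chi> b. v b)) = (\<chi> b. q0 b) + t *\<^sub>R (\<chi> b. v b)"
      using Lq L0 by (simp add: matrix_vector_right_distrib matrix_vector_mult_scaleR)
    moreover have "t \<noteq> 0" using t S_def by auto
    ultimately show ?thesis by simp
  qed
  have KM: "K ** M = mat 1"
  proof (rule matrix_eq[THEN iffD2], intro allI)
    fix x :: "real^'b"
    define s where "s = sum (\<lambda>b. x $ b) UNIV"
    define v where "v b = x $ b - s * q0 b" for b
    have "sum v UNIV = 0" using sq0 by (simp add: v_def s_def sum_subtractf sum_distrib_left[symmetric])
    hence "(K ** M) *v (\<chi> b. v b) = (\<chi> b. v b)" by (rule Lv)
    moreover have "x = s *\<^sub>R (\<chi> b. q0 b) + (\<chi> b. v b)" by (simp add: vec_eq_iff v_def)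
    ultimately have "(K ** M) *v x = x"
      using L0 by (metis matrix_vector_right_distrib matrix_vector_mult_scaleR)
    thus "(K ** M) *v x = mat 1 *v x" by simp
  qed
  from assms(5) obtain M' where M': "M ** M' = mat 1" "M' ** M = mat 1"
    unfolding invertible_def M_def by blast
  have "K = K ** (M ** M')" using M' by simp
  also have "\<dots> = M'" by (simp add: matrix_mul_assoc KM)
  finally have "K = M'" .
  thus ?thesis using M' KM M_def K_def by simp
qed

end
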